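(* Let $P=\{p_1,\dots,p_n\}\subset\mathbb{R}^2$ be in convex position, labeled counter-clockwise (indices mod $n$), and let $T$ be a triangulation of $P$. Let $d=(d_{ij})$ be the point of the polyhedron $Y$ satisfying $d_{ij}=0$ for all edges $ij$ of $T$ (the vertex of $Y$ corresponding to $T$). Then for every $i$, $$d_{i-1,i+1}=-\det(p_{i-1},p_i,p_{i+1})\bigl(\operatorname{Area}_T(p_i)-\det(p_{i-1},p_i,p_{i+1})\bigr).$$
   Context: $\det(q_0,q_1,q_2)$ is the determinant of the $3\times3$ matrix with columns $(q_0,1),(q_1,1),(q_2,1)$; with counter-clockwise labeling, $\det(p_i,p_j,p_k)>0$ iff $i,j,k$ are in cyclic order. $\operatorname{Area}_T(p_i)=\sum_{l=1}^{t-1}\det(p_i,p_{j_l},p_{j_{l+1}})$ where $p_{j_1},\dots,p_{j_t}$ are the neighbors of $p_i$ in $T$ in angular order from $p_{j_1}=p_{i+1}$ to $p_{j_t}=p_{i-1}$ (twice the total area of the triangles of $T$ at $p_i$). $Y\subset\mathbb{R}^{\binom n2}$ (coordinates $d_{ij}=d_{ji}$) is defined by $d_{ij}\le0$ for all pairs and, for every four distinct indices, $\sum w_{\alpha\beta}d_{\alpha\beta}=1$ over the six pairs of the quadruple, with $w_{\alpha\beta}=1/(\det(p_\alpha,p_\beta,p_\gamma)\det(p_\alpha,p_\beta,p_\delta))$, $\{\gamma,\delta\}$ the other two indices. *)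

theory Defs
  imports Complex_Main
begin

type_synonym pt = "real \<times> real"

text \<open>det(q0,q1,q2): determinant of the 3x3 matrix with columns (q0,1),(q1,1),(q2,1).\<close>
definition det3 :: "pt \<Rightarrow> pt \<Rightarrow> pt \<Rightarrow> real" where
  "det3 a b c =
     fst a * snd b + fst b * snd c + fst c * snd a
   - fst c * snd b - fst b * snd a - fst a * snd c"

definition convex_ccw :: "nat \<Rightarrow> (nat \<Rightarrow> pt) \<Rightarrow> bool" where
  "convex_ccw n p \<longleftrightarrow> (\<forall>i j k. i < j \<and> j < k \<and> k < n \<longrightarrow> det3 (p i) (p j) (p k) > 0)"

definition nxt :: "nat \<Rightarrow> nat \<Rightarrow> nat" where "nxt n i = (i + 1) mod n"
definition prv :: "nat \<Rightarrow> nat \<Rightarrow> nat" where "prv n i = (i + n - 1) mod n"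

text \<open>Segments between points of a convex polygon are encoded as pairs (i,j) with i < j.
  Two such segments cross (in their relative interiors) iff their endpoints interleave.\<close>
definition crosses :: "nat \<times> nat \<Rightarrow> nat \<times> nat \<Rightarrow> bool" where
  "crosses e f \<longleftrightarrow> (case e of (a,b) \<Rightarrow> case f of (c,d) \<Rightarrow>
      (a < c \<and> c < b \<and> b < d) \<or> (c < a \<and> a < d \<and> d < b))"

text \<open>A triangulation of the convex point set: a maximal set of pairwise non-crossing
  segments with endpoints in P (it automatically contains all boundary edges).\<close>
definition triangulation :: "nat \<Rightarrow> (nat \<times> nat) set \<Rightarrow> bool" where
  "triangulation n T \<longleftrightarrow>
     T \<subseteq> {(i,j). i < j \<and> j < n} \<and>
     (\<forall>e\<in>T. \<forall>f\<in>T. \<not> crosses e f) \<and>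
     (\<forall>i j. i < j \<and> j < n \<and> (i,j) \<notin> T \<longrightarrow> (\<exists>f\<in>T. crosses (i,j) f))"

definition is_edge :: "(nat \<times> nat) set \<Rightarrow> nat \<Rightarrow> nat \<Rightarrow> bool" where
  "is_edge T i j \<longleftrightarrow> (min i j, max i j) \<in> T \<and> i \<noteq> j"

text \<open>Neighbours of p i in T, listed in angular order starting at p (i+1) and ending at
  p (i-1); for points in convex position this is the cyclic index order starting after i.\<close>
definition nbrs :: "nat \<Rightarrow> (nat \<times> nat) set \<Rightarrow> nat \<Rightarrow> nat list" where
  "nbrs n T i = sort_key (\<lambda>j. (j + n - i) mod n)
                   (sorted_list_of_set {j. j < n \<and> is_edge T i j})"

definition AreaT :: "nat \<Rightarrow> (nat \<Rightarrow> pt) \<Rightarrow> (nat \<times> nat) set \<Rightarrow> nat \<Rightarrow> real" where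
  "AreaT n p T i = (let L = nbrs n T i in
     (\<Sum>l\<in>{1..<length L}. det3 (p i) (p (L ! (l - 1))) (p (L ! l))))"

definition wt :: "(nat \<Rightarrow> pt) \<Rightarrow> nat \<Rightarrow> nat \<Rightarrow> nat \<Rightarrow> nat \<Rightarrow> real" where
  "wt p a b c e = 1 / (det3 (p a) (p b) (p c) * det3 (p a) (p b) (p e))"

definition inY :: "nat \<Rightarrow> (nat \<Rightarrow> pt) \<Rightarrow> (nat \<Rightarrow> nat \<Rightarrow> real) \<Rightarrow> bool" where
  "inY n p d \<longleftrightarrow>
     (\<forall>i j. i < n \<and> j < n \<and> i \<noteq> j \<longrightarrow> d i j = d j i \<and> d i j \<le> 0) \<and>
     (\<forall>a b c e. a < n \<and> b < n \<and> c < n \<and> e < n \<and> distinct [a,b,c,e] \<longrightarrow>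
        wt p a b c e * d a b + wt p a c b e * d a c + wt p a e b c * d a e
      + wt p b c a e * d b c + wt p b e a c * d b e + wt p c e a b * d c e = 1)"

end

theory Submission
  imports Defs
begin


lemma det3_cyc: "det3 a b c = det3 b c a" by (simp add: det3_def algebra_simps)
lemma det3_swap: "det3 a b c = - det3 b a c" by (simp add: det3_def algebra_simps)
lemma det3_cocycle: "det3 A C D - det3 A B D + det3 A B C = det3 B C D"
  by (simp add: det3_def algebra_simps)

definition rot :: "nat \<Rightarrow> nat \<Rightarrow> nat \<Rightarrow> nat" where "rot n i j = (j + n - i) mod n"

lemma rot_eq: "i < n \<Longrightarrow> j < n \<Longrightarrow> rot n i j = (if i \<le> j then j - i else j + n - i)"
proof (cases "i \<le> j")
  case True
  assume "i < n" "j < n"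
  then have "(j + n - i) mod n = ((j - i) + n) mod n" using True by (simp add: add.commute)
  also have "\<dots> = j - i" using \<open>j<n\<close> by simp
  finally show ?thesis using True by (simp add: rot_def)
next
  case False
  assume "i < n" "j < n"
  then show ?thesis using False by (simp add: rot_def)
qed

lemma cyc_order: "i < n \<Longrightarrow> a < n \<Longrightarrow> b < n \<Longrightarrow> c < n \<Longrightarrow> rot n i a < rot n i b \<Longrightarrow> rot n i b < rot n i c
  \<Longrightarrow> (a<b \<and> b<c) \<or> (b<c \<and> c<a) \<or> (c<a \<and> a<b)"
  by (cases "i \<le> a"; cases "i \<le> b"; cases "i \<le> c"; simp add: rot_eq; linarith)

lemma conv_det: assumes "convex_ccw n p" "i < n" "a < n" "b < n" "c < n" "rot n i a < rot n i b" "rot n i b < rot n i c"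
  shows "det3 (p a) (p b) (p c) > 0"
proof -
  have cv: "\<And>x y z. x<y \<Longrightarrow> y<z \<Longrightarrow> z<n \<Longrightarrow> det3 (p x) (p y) (p z) > 0"
    using assms(1) unfolding convex_ccw_def by blast
  from cyc_order[OF assms(2-7)] show ?thesis
    using cv[of a b c] cv[of b c a] cv[of c a b] assms(3-5) det3_cyc[of "p a" "p b" "p c"] det3_cyc[of "p b" "p c" "p a"]
    by auto
qed

definition btw :: "nat \<Rightarrow> nat \<Rightarrow> nat \<Rightarrow> bool" where "btw a b c \<longleftrightarrow> (a < c \<and> c < b \<or> b < c \<and> c < a)"

lemma cross_btw: "distinct [a,b,c,e] \<Longrightarrow> crosses (min a b, max a b) (min c e, max c e) \<longleftrightarrow> (btw a b c \<noteq> btw a b e)"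
  unfolding crosses_def min_def max_def btw_def by (auto split: if_splits)

lemma btw_rot1: assumes "i < n" "a < n" "b < n" "c < n" "c \<noteq> a" "c \<noteq> b" "a \<noteq> b"
  shows "btw (rot n i a) (rot n i b) (rot n i c) = (btw a b c \<noteq> (min a b < i \<and> i \<le> max a b))"
  using assms unfolding btw_def min_def max_def
  by (cases "i \<le> a"; cases "i \<le> b"; cases "i \<le> c"; cases "a \<le> b"; simp add: rot_eq; linarith)

lemma btw_rot: assumes "i < n" "a < n" "b < n" "c < n" "e < n" "distinct [a,b,c,e]"
  shows "(btw a b c \<noteq> btw a b e) \<longleftrightarrow> (btw (rot n i a) (rot n i b) (rot n i c) \<noteq> btw (rot n i a) (rot n i b) (rot n i e))"
  using assms btw_rot1[of i n a b c] btw_rot1[of i n a b e] by auto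



lemma crosses_distinct: "crosses (a,b) (c,e) \<Longrightarrow> distinct [a,b,c,e]"
  by (auto simp: crosses_def)

lemma cross_r: assumes "i < n" "a < n" "b < n" "c < n" "e < n" "distinct [a,b,c,e]"
  shows "crosses (min a b, max a b) (min c e, max c e) \<longleftrightarrow>
     (btw (rot n i a) (rot n i b) (rot n i c) \<noteq> btw (rot n i a) (rot n i b) (rot n i e))"
  using cross_btw[OF assms(6)] btw_rot[OF assms] by simp

lemma nxt_eq: assumes "i < n" shows "nxt n i = (if i+1 < n then i+1 else 0)"
proof (cases "i + 1 < n")
  case False then have "i + 1 = n" using assms by simp
  then show ?thesis by (simp add: nxt_def)
qed (simp add: nxt_def)

lemma prv_eq: assumes "i < n" shows "prv n i = (if i = 0 then n - 1 else i - 1)"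
proof (cases "i = 0")
  case True then show ?thesis using assms by (simp add: prv_def)
next
  case False
  then have "i + n - 1 = (i - 1) + n" by simp
  then have "(i + n - 1) mod n = ((i - 1) + n) mod n" by simp
  also have "\<dots> = i - 1" using assms by simp
  finally show ?thesis using False by (simp add: prv_def)
qed

lemma is_edge_sym: "is_edge T a b = is_edge T b a"
  by (auto simp: is_edge_def min_def max_def)

lemma bnd_edge: assumes "triangulation n T" "i < n" "2 \<le> n" shows "is_edge T i (nxt n i)"
proof -
  have sub: "\<And>x y. (x,y) \<in> T \<Longrightarrow> x < y \<and> y < n" using assms(1) unfolding triangulation_def by blast
  have mx: "\<And>x y. x < y \<Longrightarrow> y < n \<Longrightarrow> (x,y) \<notin> T \<Longrightarrow> \<exists>f\<in>T. crosses (x,y) f"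
    using assms(1) unfolding triangulation_def by blast
  show ?thesis
  proof (cases "i + 1 < n")
    case True
    have "(i, i+1) \<in> T"
    proof (rule ccontr)
      assume "(i, i+1) \<notin> T"
      then obtain f where "f \<in> T" "crosses (i,i+1) f" using mx[of i "i+1"] True by auto
      then obtain c e where "f = (c,e)" "crosses (i,i+1) (c,e)" by (cases f) auto
      then show False unfolding crosses_def by auto
    qed
    then show ?thesis using True assms by (simp add: nxt_eq is_edge_def)
  next
    case False
    then have ii: "i = n - 1" using assms by simp
    have "(0, n - 1) \<in> T"
    proof (rule ccontr)
      assume "(0, n - 1) \<notin> T"
      then obtain f where "f \<in> T" "crosses (0,n - 1) f" using mx[of 0 "n - 1"] assms by auto
      then obtain c e where "f = (c,e)" "crosses (0,n - 1) (c,e)" "(c,e) \<in> T" by (cases f) auto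
      then show False using sub[of c e] unfolding crosses_def by auto
    qed
    then show ?thesis using False assms ii by (simp add: nxt_eq is_edge_def)
  qed
qed

lemma alg: fixes b aC aD xC xD S e :: real
  assumes "b > 0" "aC > 0" "aD > 0" "xC = - aC * (S - aC)"
    "xC / (b * aC) + xD / ((- b) * aD) = 1" "b = e - aD + aC"
  shows "xD = - aD * (S + e - aD)"
proof -
  from assms(5) have "xC * aD - xD * aC = b * aC * aD" using assms(1-3)
    by (simp add: field_simps)
  define Y where "Y = - aD * (S + e - aD)"
  have "xD * aC = xC * aD - b * aC * aD" using \<open>xC * aD - xD * aC = b * aC * aD\<close> by algebra
  also have "\<dots> = Y * aC" unfolding Y_def assms(4) assms(6) by algebra
  finally have "xD * aC = Y * aC" .
  then have "xD = Y" using assms(2) by simp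
  then show ?thesis unfolding Y_def .
qed

lemma rot_lt: "0 < n \<Longrightarrow> rot n i j < n" by (simp add: rot_def)
lemma rot_self: "i < n \<Longrightarrow> rot n i i = 0" by (simp add: rot_eq)
lemma rot_inj: "i < n \<Longrightarrow> x < n \<Longrightarrow> y < n \<Longrightarrow> rot n i x = rot n i y \<Longrightarrow> x = y"
  by (simp add: rot_eq split: if_splits)
lemma nxt_lt: "i < n \<Longrightarrow> nxt n i < n" by (simp add: nxt_eq)
lemma prv_lt: "i < n \<Longrightarrow> prv n i < n" by (simp add: prv_eq; arith)
lemma rot_nxt: "i < n \<Longrightarrow> 2 \<le> n \<Longrightarrow> rot n i (nxt n i) = 1"
  by (simp add: nxt_eq rot_eq; arith)
lemma rot_prv: "i < n \<Longrightarrow> 2 \<le> n \<Longrightarrow> rot n i (prv n i) = n - 1"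
  by (simp add: prv_eq rot_eq)
lemma nxt_prv: "i < n \<Longrightarrow> 2 \<le> n \<Longrightarrow> nxt n (prv n i) = i"
  by (simp add: prv_eq nxt_eq)

theorem lemma5p4:
  fixes n :: nat and p :: "nat \<Rightarrow> real \<times> real" and T :: "(nat \<times> nat) set"
    and d :: "nat \<Rightarrow> nat \<Rightarrow> real"
  assumes "n \<ge> 3"
    and "convex_ccw n p"
    and "triangulation n T"
    and "inY n p d"
    and "\<forall>i j. i < n \<and> j < n \<and> is_edge T i j \<longrightarrow> d i j = 0"
  shows "\<forall>i < n. d (prv n i) (nxt n i) =
           - det3 (p (prv n i)) (p i) (p (nxt n i))
             * (AreaT n p T i - det3 (p (prv n i)) (p i) (p (nxt n i)))"
proof (intro allI impI)
  fix i assume i: "i < n"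
  have n2: "2 \<le> n" "0 < n" using assms(1) by auto
  have tri_nc: "\<And>e f. e \<in> T \<Longrightarrow> f \<in> T \<Longrightarrow> \<not> crosses e f"
    using assms(3) unfolding triangulation_def by blast
  have tri_max: "\<And>x y. x < y \<Longrightarrow> y < n \<Longrightarrow> (x,y) \<notin> T \<Longrightarrow> \<exists>f\<in>T. crosses (x,y) f"
    using assms(3) unfolding triangulation_def by blast
  have tri_sub: "\<And>x y. (x,y) \<in> T \<Longrightarrow> x < y \<and> y < n"
    using assms(3) unfolding triangulation_def by blast
  have dsym: "\<And>x y. x < n \<Longrightarrow> y < n \<Longrightarrow> x \<noteq> y \<Longrightarrow> d x y = d y x"
    using assms(4) unfolding inY_def by blast
  have quad: "\<And>a b c e. a < n \<Longrightarrow> b < n \<Longrightarrow> c < n \<Longrightarrow> e < n \<Longrightarrow> distinct [a,b,c,e] \<Longrightarrow>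
        wt p a b c e * d a b + wt p a c b e * d a c + wt p a e b c * d a e
      + wt p b c a e * d b c + wt p b e a c * d b e + wt p c e a b * d c e = 1"
    using assms(4) unfolding inY_def by blast
  have d0: "\<And>x y. x < n \<Longrightarrow> y < n \<Longrightarrow> is_edge T x y \<Longrightarrow> d x y = 0"
    using assms(5) by blast
  define r where "r = rot n i"
  define N where "N = {j. j < n \<and> is_edge T i j}"
  define L where "L = nbrs n T i"
  define t where "t = length L"
  define B where "B = nxt n i"
  define Pv where "Pv = prv n i"
  have L_eq: "L = sort_key r (sorted_list_of_set N)"
    unfolding L_def nbrs_def r_def N_def rot_def by simp
  have finN: "finite N" unfolding N_def by simp
  have setL: "set L = N" using finN L_eq by simp
  have distL: "distinct L" using L_eq by simp
  have sortL: "sorted (map r L)" using L_eq by simp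
  have LinN: "\<And>k. k < t \<Longrightarrow> L!k \<in> N" using setL nth_mem t_def by blast
  have Lsub: "\<And>k. k < t \<Longrightarrow> L!k < n" using LinN N_def by blast
  have Ledge: "\<And>k. k < t \<Longrightarrow> is_edge T i (L!k)" using LinN N_def by blast
  have rinj: "\<And>x y. x < n \<Longrightarrow> y < n \<Longrightarrow> r x = r y \<Longrightarrow> x = y"
    unfolding r_def using rot_inj i by blast
  have rlt: "\<And>x. r x < n" unfolding r_def using rot_lt n2 by blast
  have ri: "r i = 0" unfolding r_def using rot_self i by blast
  have strict: "\<And>k l. k < l \<Longrightarrow> l < t \<Longrightarrow> r (L!k) < r (L!l)"
  proof -
    fix k l assume kl: "k < l" "l < t"
    have "r (L!k) \<le> r (L!l)" using sorted_nth_mono[OF sortL, of k l] kl by (simp add: t_def)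
    moreover have "L!k \<noteq> L!l" using distL kl nth_eq_iff_index_eq[OF distL, of k l] by (simp add: t_def)
    then have "r (L!k) \<noteq> r (L!l)" using rinj Lsub kl by (metis order.strict_trans)
    ultimately show "r (L!k) < r (L!l)" by simp
  qed
  have strict_rev: "\<And>k l. k < t \<Longrightarrow> l < t \<Longrightarrow> r (L!k) < r (L!l) \<Longrightarrow> k < l"
    using strict by (metis less_asym linorder_neqE_nat)
  have rpos: "\<And>k. k < t \<Longrightarrow> 0 < r (L!k)"
  proof (rule ccontr)
    fix k assume k: "k < t" "\<not> 0 < r (L!k)"
    then have "r (L!k) = r i" using ri by simp
    then have "L!k = i" using rinj Lsub k i by blast
    then show False using Ledge[OF k(1)] by (simp add: is_edge_def)
  qed
  have Bn: "B < n" unfolding B_def using nxt_lt i by blast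
  have Pn: "Pv < n" unfolding Pv_def using prv_lt i by blast
  have rB: "r B = 1" unfolding r_def B_def using rot_nxt i n2 by blast
  have rP: "r Pv = n - 1" unfolding r_def Pv_def using rot_prv i n2 by blast
  have eB: "is_edge T i B" unfolding B_def using bnd_edge assms(3) i n2 by blast
  have eP: "is_edge T i Pv"
    using bnd_edge[OF assms(3) Pn n2(1)] nxt_prv[OF i n2(1)] is_edge_sym unfolding Pv_def by metis
  have "B \<in> set L" using setL eB Bn N_def by blast
  then obtain kB where kB: "kB < t" "L!kB = B" by (auto simp: in_set_conv_nth t_def)
  have tpos: "0 < t" using kB by simp
  have L0: "L!0 = B"
  proof (rule ccontr)
    assume "L!0 \<noteq> B"
    then have "0 < kB" using kB by (cases kB) auto
    then have "r (L!0) < r B" using strict kB by metis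
    then show False using rB rpos[OF tpos] by simp
  qed
  have "Pv \<in> set L" using setL eP Pn N_def by blast
  then obtain kP where kP: "kP < t" "L!kP = Pv" by (auto simp: in_set_conv_nth t_def)
  have Llast: "L!(t - 1) = Pv"
  proof (rule ccontr)
    assume "L!(t - 1) \<noteq> Pv"
    then have "kP < t - 1" using kP by (cases "kP = t - 1") auto
    then have "r Pv < r (L!(t - 1))" using strict kP by (metis diff_less tpos zero_less_one)
    then show False using rP rlt[of "L!(t - 1)"] by simp
  qed
  have t2: "1 \<le> t - 1"
  proof (rule ccontr)
    assume "\<not> 1 \<le> t - 1"
    then have "t - 1 = 0" by simp
    then have "B = Pv" using L0 Llast by simp
    then show False using rB rP assms(1) by simp
  qed
  have consec: "\<And>l. Suc l < t \<Longrightarrow> is_edge T (L!l) (L!(Suc l))"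
  proof (rule ccontr)
    fix l assume l: "Suc l < t" and ne: "\<not> is_edge T (L!l) (L!(Suc l))"
    define u where "u = L!l"
    define v where "v = L!(Suc l)"
    have un: "u < n" and vn: "v < n" using Lsub l unfolding u_def v_def by auto
    have ruv: "r u < r v" using strict l unfolding u_def v_def by simp
    have ru0: "0 < r u" using rpos l unfolding u_def by simp
    have uv: "u \<noteq> v" using ruv by auto
    have "(min u v, max u v) \<notin> T" using ne uv unfolding is_edge_def u_def v_def by simp
    then obtain f where f: "f \<in> T" "crosses (min u v, max u v) f"
    proof -
      have "min u v < max u v" "max u v < n" using uv un vn by (auto simp: min_def max_def)
      then show ?thesis using tri_max[of "min u v" "max u v"] \<open>(min u v, max u v) \<notin> T\<close> that by blast
    qed
    obtain x y where fxy: "f = (x,y)" by (cases f)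
    have xy: "x < y" "y < n" using tri_sub f fxy by auto
    have fmm: "f = (min x y, max x y)" using fxy xy by simp
    have dst: "distinct [min u v, max u v, x, y]" using crosses_distinct f fxy by simp
    have dst2: "distinct [u, v, x, y]" using dst uv by (auto simp: min_def max_def split: if_splits)
    have key: "\<And>z w. (min z w, max z w) \<in> T \<Longrightarrow> z < n \<Longrightarrow> w < n \<Longrightarrow> distinct [u,v,z,w]
       \<Longrightarrow> r u < r z \<Longrightarrow> r z < r v \<Longrightarrow> \<not> (r u < r w \<and> r w < r v) \<Longrightarrow> False"
    proof -
      fix z w assume zw: "(min z w, max z w) \<in> T" "z < n" "w < n" "distinct [u,v,z,w]"
        "r u < r z" "r z < r v" "\<not> (r u < r w \<and> r w < r v)"
      have rwu: "r w \<noteq> r u" "r w \<noteq> r v" using rinj zw un vn by auto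
      have zi: "z \<noteq> i" using zw(5) ri by auto
      show False
      proof (cases "w = i")
        case True
        then have "is_edge T i z" using zw zi unfolding is_edge_def by (simp add: min.commute max.commute)
        then have "z \<in> set L" using setL zw N_def by blast
        then obtain k where k: "k < t" "L!k = z" by (auto simp: in_set_conv_nth t_def)
        have "l < k" using strict_rev[of l k] k l zw(5) unfolding u_def by simp
        moreover have "k < Suc l" using strict_rev[of k "Suc l"] k l zw(6) unfolding v_def by simp
        ultimately show False by simp
      next
        case False
        then have rw0: "0 < r w" using rinj ri zw i by (metis gr0I)
        show False
        proof (cases "r v < r w")
          case True
          have ev: "(min i v, max i v) \<in> T" using Ledge l unfolding v_def is_edge_def by blast
          have d4: "distinct [i, v, z, w]" using zw zi False ri ru0 ruv by auto
          have "crosses (min i v, max i v) (min z w, max z w)"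
            using cross_r[OF i i vn zw(2) zw(3) d4] True zw ri ruv ru0 unfolding r_def[symmetric] btw_def by auto
          then show False using tri_nc ev zw(1) by blast
        next
          case False
          then have "r w < r u" using rwu zw(7) by auto
          have eu: "(min i u, max i u) \<in> T" using Ledge l unfolding u_def is_edge_def by simp
          have d4: "distinct [i, u, z, w]" using zw zi \<open>w \<noteq> i\<close> ri ru0 by auto
          have "crosses (min i u, max i u) (min z w, max z w)"
            using cross_r[OF i i un zw(2) zw(3) d4] \<open>r w < r u\<close> zw ri rw0 unfolding r_def[symmetric] btw_def by auto
          then show False using tri_nc eu zw(1) by blast
        qed
      qed
    qed
    have "btw (r u) (r v) (r x) \<noteq> btw (r u) (r v) (r y)"
      using cross_r[OF i un vn _ xy(2) dst2] xy f fxy unfolding r_def by simp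
    then show False
    proof (cases "r u < r x \<and> r x < r v")
      case True
      then have "\<not> (r u < r y \<and> r y < r v)" using \<open>btw (r u) (r v) (r x) \<noteq> btw (r u) (r v) (r y)\<close> ruv
        unfolding btw_def by auto
      then show False using key[of x y] True f fmm xy dst2 by auto
    next
      case False
      then have "r u < r y \<and> r y < r v" using \<open>btw (r u) (r v) (r x) \<noteq> btw (r u) (r v) (r y)\<close> ruv
        unfolding btw_def by auto
      then show False using key[of y x] False f fmm xy dst2 by (auto simp: min.commute max.commute)
    qed
  qed
  define S where "S l = (\<Sum>m\<in>{1..<Suc l}. det3 (p i) (p (L!(m - 1))) (p (L!m)))" for l
  have main: "\<And>l. 1 \<le> l \<Longrightarrow> l < t \<Longrightarrow>
     d B (L!l) = - det3 (p i) (p B) (p (L!l)) * (S l - det3 (p i) (p B) (p (L!l)))"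
  proof -
    fix l show "1 \<le> l \<Longrightarrow> l < t \<Longrightarrow>
     d B (L!l) = - det3 (p i) (p B) (p (L!l)) * (S l - det3 (p i) (p B) (p (L!l)))"
    proof (induction l)
      case 0 then show ?case by simp
    next
      case (Suc l)
      show ?case
      proof (cases "l = 0")
        case True
        have "is_edge T B (L!1)" using consec[of 0] Suc.prems L0 True by simp
        then have "d B (L!1) = 0" using d0 Bn Lsub Suc.prems True by simp
        moreover have "S 1 = det3 (p i) (p B) (p (L!1))" unfolding S_def using L0 by simp
        ultimately show ?thesis using True by simp
      next
        case False
        define C where "C = L!l"
        define D where "D = L!(Suc l)"
        have IH: "d B C = - det3 (p i) (p B) (p C) * (S l - det3 (p i) (p B) (p C))"
          using Suc.IH False Suc.prems unfolding C_def by simp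
        have Cn: "C < n" and Dn: "D < n" using Lsub Suc.prems unfolding C_def D_def by auto
        have rC: "1 < r C" using strict[of 0 l] L0 rB False Suc.prems unfolding C_def by simp
        have rCD: "r C < r D" using strict[of l "Suc l"] Suc.prems unfolding C_def D_def by simp
        have dst: "distinct [B, C, D, i]" using rC rCD rB ri by auto
        have eq: "wt p B C D i * d B C + wt p B D C i * d B D + wt p B i C D * d B i
           + wt p C D B i * d C D + wt p C i B D * d C i + wt p D i B C * d D i = 1"
          using quad[OF Bn Cn Dn i dst] .
        have "d B i = 0" using d0 Bn i eB is_edge_sym by metis
        moreover have "d C D = 0" using d0 Cn Dn consec Suc.prems unfolding C_def D_def by simp
        moreover have "d C i = 0" using d0 Cn i Ledge Suc.prems is_edge_sym unfolding C_def
          by (metis Suc_lessD)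
        moreover have "d D i = 0" using d0 Dn i Ledge Suc.prems is_edge_sym unfolding D_def by metis
        ultimately have eq2: "wt p B C D i * d B C + wt p B D C i * d B D = 1" using eq by simp
        have pC: "det3 (p i) (p B) (p C) > 0"
          using conv_det[OF assms(2) i i Bn Cn] ri rB rC unfolding r_def by simp
        have pD: "det3 (p i) (p B) (p D) > 0"
          using conv_det[OF assms(2) i i Bn Dn] ri rB rC rCD unfolding r_def by simp
        have pb: "det3 (p B) (p C) (p D) > 0"
          using conv_det[OF assms(2) i Bn Cn Dn] rB rC rCD unfolding r_def by simp
        have w1: "wt p B C D i = 1 / (det3 (p B) (p C) (p D) * det3 (p i) (p B) (p C))"
          unfolding wt_def using det3_cyc[of "p i" "p B" "p C"] by simp
        have w2: "wt p B D C i = 1 / ((- det3 (p B) (p C) (p D)) * det3 (p i) (p B) (p D))"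
          unfolding wt_def using det3_cyc[of "p i" "p B" "p D"] det3_swap[of "p B" "p D" "p C"]
            det3_cyc[of "p D" "p B" "p C"] det3_cyc[of "p B" "p C" "p D"] by simp
        have eq3: "d B C / (det3 (p B) (p C) (p D) * det3 (p i) (p B) (p C))
           + d B D / ((- det3 (p B) (p C) (p D)) * det3 (p i) (p B) (p D)) = 1"
          using eq2 unfolding w1 w2 by simp
        have coc: "det3 (p B) (p C) (p D) = det3 (p i) (p C) (p D) - det3 (p i) (p B) (p D) + det3 (p i) (p B) (p C)"
          using det3_cocycle[of "p i" "p C" "p D" "p B"] by simp
        have SS: "S (Suc l) = S l + det3 (p i) (p C) (p D)"
          unfolding S_def C_def D_def by simp
        have "d B D = - det3 (p i) (p B) (p D) * (S l + det3 (p i) (p C) (p D) - det3 (p i) (p B) (p D))"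
          using alg[OF pb pC pD IH eq3 coc] .
        then show ?thesis unfolding SS D_def by simp
      qed
    qed
  qed
  have fin: "d B Pv = - det3 (p i) (p B) (p Pv) * (S (t - 1) - det3 (p i) (p B) (p Pv))"
    using main[OF t2] Llast tpos by simp
  have area: "AreaT n p T i = S (t - 1)"
    unfolding AreaT_def S_def L_def[symmetric] t_def[symmetric] Let_def using tpos by simp
  have "d Pv B = d B Pv" using dsym Pn Bn rB rP assms(1) by (metis One_nat_def diff_Suc_1 numeral_3_eq_3 not_less_eq_eq)
  moreover have "det3 (p Pv) (p i) (p B) = det3 (p i) (p B) (p Pv)" using det3_cyc by metis
  ultimately show "d (prv n i) (nxt n i) =
           - det3 (p (prv n i)) (p i) (p (nxt n i))
             * (AreaT n p T i - det3 (p (prv n i)) (p i) (p (nxt n i)))"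
    using fin area unfolding B_def Pv_def by simp
qed

end
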